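(* Let $n_1,n_2\ge 1$ be integers, $n=n_1+n_2$, and consider a uniformly random arrangement of $n_1$ symbols $x$ and $n_2$ symbols $y$ (all $\binom{n}{n_1}$ arrangements equally likely). Let $R_1$ and $R_2$ be the numbers of runs of $x$'s and of $y$'s, respectively, and $R_M=\max(R_1,R_2)$. Then $$E(R_M)=2+\frac{n(n_1-1)(n_2-1)-2n_1n_2}{n(n-1)},$$ $$\mathrm{Var}(R_M)=\frac{n_1n_2\left[n_1^3+n_2^3+n_1^3n_2+n_1n_2^3-n_1^2-n_2^2+2n_1^2n_2^2-5n_1^2n_2-5n_1n_2^2+6n_1n_2\right]}{n^2(n-1)^2(n-2)}.$$
   Context: A run is a maximal block of consecutive identical symbols in the arrangement. *)

theory Defs
  imports Complex_Main
begin

text \<open>An arrangement of n1 symbols x and n2 symbols y is a boolean list of length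
  n1 + n2 in which True (= x) occurs exactly n1 times.\<close>
definition arrangements :: "nat \<Rightarrow> nat \<Rightarrow> bool list set" where
  "arrangements n1 n2 = {xs. length xs = n1 + n2 \<and> count_list xs True = n1}"

text \<open>Number of runs (maximal blocks of consecutive equal symbols) of symbol a:
  the number of positions where a run of a starts.\<close>
definition runs :: "bool \<Rightarrow> bool list \<Rightarrow> nat" where
  "runs a xs = card {i. i < length xs \<and> xs ! i = a \<and> (i = 0 \<or> xs ! (i - 1) \<noteq> a)}"

definition RM :: "bool list \<Rightarrow> nat" where
  "RM xs = max (runs True xs) (runs False xs)"

definition unif_exp :: "'a set \<Rightarrow> ('a \<Rightarrow> real) \<Rightarrow> real" where
  "unif_exp A f = (\<Sum>a\<in>A. f a) / real (card A)"

definition unif_var :: "'a set \<Rightarrow> ('a \<Rightarrow> real) \<Rightarrow> real" where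
  "unif_var A f = unif_exp A (\<lambda>a. (f a - unif_exp A f)^2)"

end

theory Submission
  imports Defs
begin


definition ff :: "nat \<Rightarrow> nat \<Rightarrow> real" where
  "ff m k = (\<Prod>i<k. (real m - real i))"

lemma ff_0[simp]: "ff m 0 = 1" by (simp add: ff_def)
lemma ff_Suc: "ff m (Suc k) = ff m k * (real m - real k)" by (simp add: ff_def)

lemma ff_zero: "m < k \<Longrightarrow> ff m k = 0"
  unfolding ff_def by (rule prod_zero) auto

lemma ff_fact: "k \<le> m \<Longrightarrow> ff m k * fact (m - k) = fact m"
proof (induction k)
  case 0 then show ?case by simp
next
  case (Suc k)
  have "fact (m - k) = (real m - real k) * (fact (m - Suc k) :: real)"
  proof -
    have e: "m - k = Suc (m - Suc k)" using Suc.prems by simp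
    have r: "real (Suc (m - Suc k)) = real m - real k" using Suc.prems by (simp add: of_nat_diff)
    show ?thesis unfolding e fact_Suc r by simp
  qed
  then show ?case using Suc by (simp add: ff_Suc)
qed

lemma ff_pos: "k \<le> m \<Longrightarrow> ff m k > 0"
  unfolding ff_def by (rule prod_pos) auto

lemma count_true_card: "count_list xs True = card {i. i < length xs \<and> xs ! i}"
  by (simp add: count_list_eq_length_filter length_filter_conv_card)

lemma set_count:
  assumes "finite (T::nat set)" "finite U" "T \<subseteq> {..<n}" "U \<subseteq> {..<n}" "T \<inter> U = {}"
    "card T \<le> k"
  shows "card {S. S \<subseteq> {..<n} \<and> card S = k \<and> T \<subseteq> S \<and> S \<inter> U = {}}
         = (n - card T - card U) choose (k - card T)"
proof -
  have "bij_betw (\<lambda>S. S - T) {S. S \<subseteq> {..<n} \<and> card S = k \<and> T \<subseteq> S \<and> S \<inter> U = {}}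
          {S'. S' \<subseteq> {..<n} - T - U \<and> card S' = k - card T}"
  proof (rule bij_betw_byWitness[where f' = "\<lambda>S'. S' \<union> T"])
    show "\<forall>a\<in>{S. S \<subseteq> {..<n} \<and> card S = k \<and> T \<subseteq> S \<and> S \<inter> U = {}}. a - T \<union> T = a" by auto
    show "\<forall>a'\<in>{S'. S' \<subseteq> {..<n} - T - U \<and> card S' = k - card T}. a' \<union> T - T = a'" by auto
    show "(\<lambda>S. S - T) ` {S. S \<subseteq> {..<n} \<and> card S = k \<and> T \<subseteq> S \<and> S \<inter> U = {}}
        \<subseteq> {S'. S' \<subseteq> {..<n} - T - U \<and> card S' = k - card T}"
    proof (rule image_subsetI)
      fix S assume "S \<in> {S. S \<subseteq> {..<n} \<and> card S = k \<and> T \<subseteq> S \<and> S \<inter> U = {}}"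
      then have h: "S \<subseteq> {..<n}" "T \<subseteq> S" "S \<inter> U = {}" "k = card S" by auto
      then have "card (S - T) = card S - card T"
        by (meson card_Diff_subset finite_lessThan finite_subset assms(1))
      then show "S - T \<in> {S'. S' \<subseteq> {..<n} - T - U \<and> card S' = k - card T}"
        using h by auto
    qed
    show "(\<lambda>S'. S' \<union> T) ` {S'. S' \<subseteq> {..<n} - T - U \<and> card S' = k - card T}
        \<subseteq> {S. S \<subseteq> {..<n} \<and> card S = k \<and> T \<subseteq> S \<and> S \<inter> U = {}}"
    proof (rule image_subsetI)
      fix S' assume "S' \<in> {S'. S' \<subseteq> {..<n} - T - U \<and> card S' = k - card T}"
      then have h: "S' \<subseteq> {..<n} - T - U" "card S' = k - card T" by auto
      have "finite S'" using h(1) finite_subset by blast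
      moreover have "S' \<inter> T = {}" using h(1) by auto
      ultimately have "card (S' \<union> T) = card S' + card T"
        using assms(1) card_Un_disjoint by blast
      then show "S' \<union> T \<in> {S. S \<subseteq> {..<n} \<and> card S = k \<and> T \<subseteq> S \<and> S \<inter> U = {}}"
        using h assms by auto
    qed
  qed
  then have "card {S. S \<subseteq> {..<n} \<and> card S = k \<and> T \<subseteq> S \<and> S \<inter> U = {}}
      = card {S'. S' \<subseteq> {..<n} - T - U \<and> card S' = k - card T}"
    by (rule bij_betw_same_card)
  also have "\<dots> = card ({..<n} - T - U) choose (k - card T)"
    by (rule n_subsets) simp
  also have "card ({..<n} - T - U) = n - card T - card U"
  proof -
    have "card ({..<n} - T - U) = card ({..<n} - T) - card U"
      using assms by (intro card_Diff_subset) auto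
    also have "card ({..<n} - T) = n - card T" using assms by (simp add: card_Diff_subset)
    finally show ?thesis .
  qed
  finally show ?thesis .
qed

lemma arr_bij:
  assumes "n = n1 + n2" "T \<subseteq> {..<n}" "U \<subseteq> {..<n}"
  shows "bij_betw (\<lambda>xs. {i. i < n \<and> xs ! i})
     {xs \<in> arrangements n1 n2. (\<forall>k\<in>T. xs!k) \<and> (\<forall>k\<in>U. \<not> xs!k)}
     {S. S \<subseteq> {..<n} \<and> card S = n1 \<and> T \<subseteq> S \<and> S \<inter> U = {}}"
proof (rule bij_betw_byWitness[where f' = "\<lambda>S. map (\<lambda>i. i \<in> S) [0..<n]"])
  show "\<forall>a\<in>{xs \<in> arrangements n1 n2. (\<forall>k\<in>T. xs!k) \<and> (\<forall>k\<in>U. \<not> xs!k)}.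
          map (\<lambda>i. i \<in> {i. i < n \<and> a ! i}) [0..<n] = a"
    by (auto simp: arrangements_def assms intro!: nth_equalityI)
  show "\<forall>a'\<in>{S. S \<subseteq> {..<n} \<and> card S = n1 \<and> T \<subseteq> S \<and> S \<inter> U = {}}.
          {i. i < n \<and> map (\<lambda>i. i \<in> a') [0..<n] ! i} = a'"
    by auto
  show "(\<lambda>xs. {i. i < n \<and> xs ! i}) ` {xs \<in> arrangements n1 n2. (\<forall>k\<in>T. xs!k) \<and> (\<forall>k\<in>U. \<not> xs!k)}
     \<subseteq> {S. S \<subseteq> {..<n} \<and> card S = n1 \<and> T \<subseteq> S \<and> S \<inter> U = {}}"
    using assms(2,3) unfolding assms(1) by (auto simp: arrangements_def count_true_card)
  show "(\<lambda>S. map (\<lambda>i. i \<in> S) [0..<n]) ` {S. S \<subseteq> {..<n} \<and> card S = n1 \<and> T \<subseteq> S \<and> S \<inter> U = {}}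
     \<subseteq> {xs \<in> arrangements n1 n2. (\<forall>k\<in>T. xs!k) \<and> (\<forall>k\<in>U. \<not> xs!k)}"
  proof (rule image_subsetI)
    fix S assume "S \<in> {S. S \<subseteq> {..<n} \<and> card S = n1 \<and> T \<subseteq> S \<and> S \<inter> U = {}}"
    then have h: "S \<subseteq> {..<n}" "card S = n1" "T \<subseteq> S" "S \<inter> U = {}" by auto
    have "{i. i < length (map (\<lambda>i. i \<in> S) [0..<n]) \<and> map (\<lambda>i. i \<in> S) [0..<n] ! i} = S"
      using h(1) by auto
    then have "count_list (map (\<lambda>i. i \<in> S) [0..<n]) True = n1"
      using h(2) by (simp only: count_true_card)
    then show "map (\<lambda>i. i \<in> S) [0..<n] \<in> {xs \<in> arrangements n1 n2. (\<forall>k\<in>T. xs!k) \<and> (\<forall>k\<in>U. \<not> xs!k)}"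
    proof -
      have "\<forall>k\<in>T. map (\<lambda>i. i \<in> S) [0..<n] ! k"
      proof
        fix k assume "k \<in> T" then have "k < n" "k \<in> S" using assms(2) h by auto
        then show "map (\<lambda>i. i \<in> S) [0..<n] ! k" by simp
      qed
      moreover have "\<forall>k\<in>U. \<not> map (\<lambda>i. i \<in> S) [0..<n] ! k"
      proof
        fix k assume "k \<in> U" then have "k < n" "k \<notin> S" using assms(3) h by auto
        then show "\<not> map (\<lambda>i. i \<in> S) [0..<n] ! k" by simp
      qed
      ultimately show ?thesis using \<open>count_list _ True = n1\<close>
        by (simp add: arrangements_def assms(1))
    qed
  qed
qed

lemma ff_eq: "k \<le> m \<Longrightarrow> ff m k = fact m / fact (m - k)"
  using ff_fact[of k m] by (simp add: field_simps)

lemma card_arr: "card (arrangements n1 n2) = (n1 + n2) choose n1"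
proof -
  have "arrangements n1 n2 = {xs \<in> arrangements n1 n2. (\<forall>k\<in>{}. xs!k) \<and> (\<forall>k\<in>{}. \<not> xs!k)}"
    by simp
  then have "card (arrangements n1 n2) = card {S. S \<subseteq> {..<n1+n2} \<and> card S = n1 \<and> {} \<subseteq> S \<and> S \<inter> {} = {}}"
    using bij_betw_same_card[OF arr_bij[of "n1+n2" n1 n2 "{}" "{}"]] by simp
  also have "\<dots> = (n1 + n2) choose n1"
    using set_count[of "{}" "{}" "n1+n2" n1] by simp
  finally show ?thesis .
qed

lemma K:
  assumes "n = n1 + n2" "T \<subseteq> {..<n}" "U \<subseteq> {..<n}" "T \<inter> U = {}"
  shows "real (card {xs \<in> arrangements n1 n2. (\<forall>k\<in>T. xs!k) \<and> (\<forall>k\<in>U. \<not> xs!k)}) * ff n (card T + card U)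
       = real (card (arrangements n1 n2)) * ff n1 (card T) * ff n2 (card U)"
proof -
  define t where "t = card T"
  define u where "u = card U"
  have fT: "finite T" "finite U" using assms finite_subset by blast+
  have tu: "t + u \<le> n"
  proof -
    have "card (T \<union> U) \<le> n" using assms(2,3) by (metis card_lessThan card_mono finite_lessThan le_sup_iff)
    then show ?thesis using card_Un_disjoint[OF fT assms(4)] t_def u_def by simp
  qed
  have cP: "card {xs \<in> arrangements n1 n2. (\<forall>k\<in>T. xs!k) \<and> (\<forall>k\<in>U. \<not> xs!k)}
      = card {S. S \<subseteq> {..<n} \<and> card S = n1 \<and> T \<subseteq> S \<and> S \<inter> U = {}}"
    by (rule bij_betw_same_card[OF arr_bij[OF assms(1-3)]])
  show ?thesis
  proof (cases "t \<le> n1")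
    case False
    have "{S. S \<subseteq> {..<n} \<and> card S = n1 \<and> T \<subseteq> S \<and> S \<inter> U = {}} = {}"
    proof (rule ccontr)
      assume "{S. S \<subseteq> {..<n} \<and> card S = n1 \<and> T \<subseteq> S \<and> S \<inter> U = {}} \<noteq> {}"
      then obtain S where "S \<subseteq> {..<n}" "card S = n1" "T \<subseteq> S" by auto
      then have "t \<le> n1" unfolding t_def by (metis card_mono finite_lessThan finite_subset)
      then show False using False by simp
    qed
    then show ?thesis using cP False ff_zero[of n1 t] t_def by simp
  next
    case True
    have c: "card {S. S \<subseteq> {..<n} \<and> card S = n1 \<and> T \<subseteq> S \<and> S \<inter> U = {}} = (n - t - u) choose (n1 - t)"
      using set_count[OF fT assms(2-4)] True t_def u_def by simp
    show ?thesis
    proof (cases "u \<le> n2")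
      case False
      have "(n - t - u) choose (n1 - t) = 0" using False True tu assms(1) by simp
      then show ?thesis using cP c False ff_zero[of n2 u] u_def by simp
    next
      case True2: True
      have e1: "real ((n - t - u) choose (n1 - t)) = fact (n - t - u) / (fact (n1 - t) * fact (n2 - u))"
      proof -
        have a: "n - t - u - (n1 - t) = n2 - u" using assms(1) True True2 by simp
        have le: "n1 - t \<le> n - t - u" using assms(1) True True2 by simp
        show ?thesis using binomial_fact[OF le] a by simp
      qed
      have e2: "real (n choose n1) = fact n / (fact n1 * fact n2)"
        using binomial_fact[of n1 n] assms(1) by simp
      have "real (card {xs \<in> arrangements n1 n2. (\<forall>k\<in>T. xs!k) \<and> (\<forall>k\<in>U. \<not> xs!k)}) * ff n (t + u)
          = fact (n - t - u) / (fact (n1 - t) * fact (n2 - u)) * (fact n / fact (n - (t + u)))"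
        using cP c e1 ff_eq[OF tu] by simp
      also have "\<dots> = fact n / (fact n1 * fact n2) * (fact n1 / fact (n1 - t)) * (fact n2 / fact (n2 - u))"
        by (simp add: field_simps)
      also have "\<dots> = real (card (arrangements n1 n2)) * ff n1 t * ff n2 u"
        using e2 ff_eq[OF True] ff_eq[OF True2] card_arr assms(1) by simp
      finally show ?thesis using t_def u_def by simp
    qed
  qed
qed

lemma fin_arr: "finite (arrangements n1 n2)"
proof -
  have "arrangements n1 n2 \<subseteq> {xs. set xs \<subseteq> UNIV \<and> length xs = n1 + n2}"
    by (auto simp: arrangements_def)
  then show ?thesis using finite_lists_length_eq[of "UNIV::bool set"] finite_subset by auto
qed

lemma K':
  assumes "n = n1 + n2" "T \<subseteq> {..<n}" "U \<subseteq> {..<n}" "T \<inter> U = {}"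
  shows "(\<Sum>xs\<in>arrangements n1 n2. of_bool ((\<forall>k\<in>T. xs!k) \<and> (\<forall>k\<in>U. \<not> xs!k)) :: real)
       = real (card (arrangements n1 n2)) * ff n1 (card T) * ff n2 (card U) / ff n (card T + card U)"
proof -
  have fT: "finite T" "finite U" using assms finite_subset by blast+
  have tu: "card T + card U \<le> n"
  proof -
    have "card (T \<union> U) \<le> n" using assms(2,3) by (metis card_lessThan card_mono finite_lessThan le_sup_iff)
    then show ?thesis using card_Un_disjoint[OF fT assms(4)] by simp
  qed
  have "(\<Sum>xs\<in>arrangements n1 n2. of_bool ((\<forall>k\<in>T. xs!k) \<and> (\<forall>k\<in>U. \<not> xs!k)) :: real)
     = real (card {xs \<in> arrangements n1 n2. (\<forall>k\<in>T. xs!k) \<and> (\<forall>k\<in>U. \<not> xs!k)})"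
  proof -
    have "arrangements n1 n2 \<inter> {xs. (\<forall>k\<in>T. xs!k) \<and> (\<forall>k\<in>U. \<not> xs!k)}
        = {xs \<in> arrangements n1 n2. (\<forall>k\<in>T. xs!k) \<and> (\<forall>k\<in>U. \<not> xs!k)}" by blast
    moreover have "(\<Sum>xs\<in>arrangements n1 n2. of_bool ((\<forall>k\<in>T. xs!k) \<and> (\<forall>k\<in>U. \<not> xs!k)) :: real)
      = real (card (arrangements n1 n2 \<inter> {xs. (\<forall>k\<in>T. xs!k) \<and> (\<forall>k\<in>U. \<not> xs!k)}))"
      by (rule sum_of_bool_eq; rule fin_arr)
    ultimately show ?thesis by (simp only:)
  qed
  moreover have "ff n (card T + card U) \<noteq> 0" using ff_pos[OF tu] by simp
  ultimately show ?thesis using K[OF assms] by (simp add: eq_divide_eq)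
qed

lemma ff1: "ff m 1 = real m" by (simp add: ff_def)
lemma ff1s[simp]: "ff m (Suc 0) = real m" by (simp add: ff_def)
lemma ff2: "ff m 2 = real m * (real m - 1)" by (simp add: ff_def eval_nat_numeral)
lemma ff3: "ff m 3 = real m * (real m - 1) * (real m - 2)" by (simp add: ff_def eval_nat_numeral)
lemma ff4: "ff m 4 = real m * (real m - 1) * (real m - 2) * (real m - 3)" by (simp add: ff_def eval_nat_numeral)

lemma F1:
  assumes "n = n1 + n2" "i < n" "j < n" "i \<noteq> j"
  shows "(\<Sum>xs\<in>arrangements n1 n2. of_bool (xs!i \<noteq> xs!j) :: real)
       = real (card (arrangements n1 n2)) * (2 * real n1 * real n2) / (real n * (real n - 1))"
proof -
  have "(\<Sum>xs\<in>arrangements n1 n2. of_bool (xs!i \<noteq> xs!j) :: real)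
      = (\<Sum>xs\<in>arrangements n1 n2. of_bool (xs!i \<and> \<not> xs!j) + of_bool (xs!j \<and> \<not> xs!i))"
    by (rule sum.cong) auto
  also have "\<dots> = real (card (arrangements n1 n2)) * ff n1 1 * ff n2 1 / ff n 2
                 + real (card (arrangements n1 n2)) * ff n1 1 * ff n2 1 / ff n 2"
    using assms K'[of n n1 n2 "{i}" "{j}"] K'[of n n1 n2 "{j}" "{i}"]
    by (simp add: sum.distrib numeral_2_eq_2)
  finally show ?thesis by (simp add: ff1 ff2 field_simps)
qed

lemma F2:
  assumes "n = n1 + n2" "i < n" "j < n" "i \<noteq> j"
  shows "(\<Sum>xs\<in>arrangements n1 n2. of_bool (xs!i = xs!j) :: real)
       = real (card (arrangements n1 n2)) * (real n1 * (real n1 - 1) + real n2 * (real n2 - 1)) / (real n * (real n - 1))"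
proof -
  have "(\<Sum>xs\<in>arrangements n1 n2. of_bool (xs!i = xs!j) :: real)
      = (\<Sum>xs\<in>arrangements n1 n2. of_bool (xs!i \<and> xs!j) + of_bool (\<not> xs!i \<and> \<not> xs!j))"
    by (rule sum.cong) auto
  also have "\<dots> = real (card (arrangements n1 n2)) * ff n1 2 * ff n2 0 / ff n 2
                 + real (card (arrangements n1 n2)) * ff n1 0 * ff n2 2 / ff n 2"
    using assms K'[of n n1 n2 "{i,j}" "{}"] K'[of n n1 n2 "{}" "{i,j}"]
    by (simp add: sum.distrib numeral_2_eq_2)
  also have "\<dots> = real (card (arrangements n1 n2)) * (real n1 * (real n1 - 1) + real n2 * (real n2 - 1)) / (real n * (real n - 1))"
    by (simp add: ff2 distrib_left add_divide_distrib)
  finally show ?thesis .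
qed

lemma F3:
  assumes "n = n1 + n2" "i < n" "j < n" "k < n" "i \<noteq> j" "j \<noteq> k" "i \<noteq> k"
  shows "(\<Sum>xs\<in>arrangements n1 n2. of_bool (xs!i \<noteq> xs!j \<and> xs!j \<noteq> xs!k) :: real)
       = real (card (arrangements n1 n2)) * (real n1 * real n2) / (real n * (real n - 1))"
proof -
  have n3: "n \<ge> 3"
  proof -
    have "card {i,j,k} \<le> card {..<n}" using assms by (intro card_mono) auto
    then show ?thesis using assms by simp
  qed
  have "(\<Sum>xs\<in>arrangements n1 n2. of_bool (xs!i \<noteq> xs!j \<and> xs!j \<noteq> xs!k) :: real)
      = (\<Sum>xs\<in>arrangements n1 n2. of_bool ((xs!i \<and> xs!k) \<and> \<not> xs!j) + of_bool (xs!j \<and> (\<not> xs!i \<and> \<not> xs!k)))"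
    by (rule sum.cong) auto
  also have "\<dots> = real (card (arrangements n1 n2)) * ff n1 2 * ff n2 1 / ff n 3
                 + real (card (arrangements n1 n2)) * ff n1 1 * ff n2 2 / ff n 3"
    using assms K'[of n n1 n2 "{i,k}" "{j}"] K'[of n n1 n2 "{j}" "{i,k}"]
    by (simp add: sum.distrib numeral_2_eq_2 numeral_3_eq_3)
  also have "\<dots> = real (card (arrangements n1 n2)) * (real n1 * real n2) / (real n * (real n - 1))"
  proof -
    have "real n - 2 \<noteq> 0" using n3 by simp
    have e: "ff n1 2 * ff n2 1 + ff n1 1 * ff n2 2 = real n1 * real n2 * (real n - 2)"
      using assms(1) by (simp add: ff1 ff2 algebra_simps)
    have "real (card (arrangements n1 n2)) * ff n1 2 * ff n2 1 / ff n 3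
                 + real (card (arrangements n1 n2)) * ff n1 1 * ff n2 2 / ff n 3
        = real (card (arrangements n1 n2)) * (ff n1 2 * ff n2 1 + ff n1 1 * ff n2 2) / ff n 3"
      by (simp add: distrib_left add_divide_distrib)
    also have "\<dots> = real (card (arrangements n1 n2)) * (real n1 * real n2 * (real n - 2)) / (real n * (real n - 1) * (real n - 2))"
      by (simp only: e ff3)
    also have "\<dots> = real (card (arrangements n1 n2)) * (real n1 * real n2) / (real n * (real n - 1))"
      using \<open>real n - 2 \<noteq> 0\<close> by simp
    finally show ?thesis .
  qed
  finally show ?thesis .
qed

lemma F4a:
  assumes "n = n1 + n2" "i < n" "j < n" "k < n" "l < n" "distinct [i,j,k,l]"
  shows "(\<Sum>xs\<in>arrangements n1 n2. of_bool (xs!i \<noteq> xs!j \<and> xs!k \<noteq> xs!l) :: real)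
       = real (card (arrangements n1 n2)) * (4 * ff n1 2 * ff n2 2) / ff n 4"
proof -
  have "(\<Sum>xs\<in>arrangements n1 n2. of_bool (xs!i \<noteq> xs!j \<and> xs!k \<noteq> xs!l) :: real)
      = (\<Sum>xs\<in>arrangements n1 n2. of_bool ((xs!i \<and> xs!k) \<and> (\<not> xs!j \<and> \<not> xs!l))
          + of_bool ((xs!i \<and> xs!l) \<and> (\<not> xs!j \<and> \<not> xs!k))
          + of_bool ((xs!j \<and> xs!k) \<and> (\<not> xs!i \<and> \<not> xs!l))
          + of_bool ((xs!j \<and> xs!l) \<and> (\<not> xs!i \<and> \<not> xs!k)))"
    by (rule sum.cong) auto
  also have "\<dots> = 4 * (real (card (arrangements n1 n2)) * ff n1 2 * ff n2 2 / ff n 4)"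
    using assms K'[of n n1 n2 "{i,k}" "{j,l}"] K'[of n n1 n2 "{i,l}" "{j,k}"]
       K'[of n n1 n2 "{j,k}" "{i,l}"] K'[of n n1 n2 "{j,l}" "{i,k}"]
    by (simp add: sum.distrib numeral_2_eq_2 eval_nat_numeral)
  finally show ?thesis by simp
qed

lemma F4b:
  assumes "n = n1 + n2" "i < n" "j < n" "k < n" "l < n" "distinct [i,j,k,l]"
  shows "(\<Sum>xs\<in>arrangements n1 n2. of_bool (xs!i = xs!j \<and> xs!k \<noteq> xs!l) :: real)
       = real (card (arrangements n1 n2)) * (2 * ff n1 3 * real n2 + 2 * real n1 * ff n2 3) / ff n 4"
proof -
  have "(\<Sum>xs\<in>arrangements n1 n2. of_bool (xs!i = xs!j \<and> xs!k \<noteq> xs!l) :: real)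
      = (\<Sum>xs\<in>arrangements n1 n2. of_bool ((xs!i \<and> xs!j \<and> xs!k) \<and> \<not> xs!l)
          + of_bool ((xs!i \<and> xs!j \<and> xs!l) \<and> \<not> xs!k)
          + of_bool (xs!k \<and> (\<not> xs!i \<and> \<not> xs!j \<and> \<not> xs!l))
          + of_bool (xs!l \<and> (\<not> xs!i \<and> \<not> xs!j \<and> \<not> xs!k)))"
    by (rule sum.cong) auto
  also have "\<dots> = 2 * (real (card (arrangements n1 n2)) * ff n1 3 * ff n2 1 / ff n 4)
                 + 2 * (real (card (arrangements n1 n2)) * ff n1 1 * ff n2 3 / ff n 4)"
    using assms K'[of n n1 n2 "{i,j,k}" "{l}"] K'[of n n1 n2 "{i,j,l}" "{k}"]
       K'[of n n1 n2 "{k}" "{i,j,l}"] K'[of n n1 n2 "{l}" "{i,j,k}"]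
    by (simp add: sum.distrib eval_nat_numeral) (simp add: mult_ac)
  finally show ?thesis by (simp add: distrib_left add_divide_distrib mult_ac)
qed



definition chg :: "bool list \<Rightarrow> real" where
  "chg xs = (\<Sum>i<length xs - 1. of_bool (xs!i \<noteq> xs!Suc i))"

definition ends :: "bool list \<Rightarrow> real" where
  "ends xs = of_bool (xs!0 = xs!(length xs - 1))"

lemma runs_sum: "real (runs a xs) = (\<Sum>i<length xs. of_bool (xs!i = a \<and> (i = 0 \<or> xs!(i-1) \<noteq> a)))"
proof -
  have "{i. i < length xs \<and> xs ! i = a \<and> (i = 0 \<or> xs ! (i - 1) \<noteq> a)}
      = {..<length xs} \<inter> {i. xs!i = a \<and> (i = 0 \<or> xs!(i-1) \<noteq> a)}" by auto
  then show ?thesis unfolding runs_def by (simp add: sum_of_bool_eq)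
qed

lemma gen_runs:
  fixes f :: "nat \<Rightarrow> bool"
  shows "2 * (\<Sum>i<Suc m. of_bool (f i = a \<and> (i = 0 \<or> f (i-1) \<noteq> a)) :: real)
       = (\<Sum>i<m. of_bool (f i \<noteq> f (Suc i))) + of_bool (f 0 = a) + of_bool (f m = a)"
proof (induction m)
  case 0 then show ?case by simp
next
  case (Suc m)
  have "2 * (\<Sum>i<Suc (Suc m). of_bool (f i = a \<and> (i = 0 \<or> f (i-1) \<noteq> a)) :: real)
     = 2 * (\<Sum>i<Suc m. of_bool (f i = a \<and> (i = 0 \<or> f (i-1) \<noteq> a))) + 2 * of_bool (f (Suc m) = a \<and> f m \<noteq> a)"
    by (simp add: distrib_left)
  also have "\<dots> = (\<Sum>i<m. of_bool (f i \<noteq> f (Suc i))) + of_bool (f 0 = a) + of_bool (f m = a)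
       + 2 * of_bool (f (Suc m) = a \<and> f m \<noteq> a)" using Suc by simp
  also have "\<dots> = (\<Sum>i<Suc m. of_bool (f i \<noteq> f (Suc i))) + of_bool (f 0 = a) + of_bool (f (Suc m) = a)"
    by (cases "f m"; cases "f (Suc m)"; cases a) simp_all
  finally show ?case .
qed

lemma runs_formula:
  assumes "xs \<noteq> []"
  shows "2 * real (runs a xs) = chg xs + of_bool (xs!0 = a) + of_bool (xs!(length xs - 1) = a)"
proof -
  obtain m where m: "length xs = Suc m" using assms by (cases xs) auto
  show ?thesis unfolding runs_sum chg_def m using gen_runs[of "\<lambda>i. xs!i" a m] by simp
qed

lemma RM_formula:
  assumes "xs \<noteq> []"
  shows "real (RM xs) = (1 + chg xs + ends xs) / 2"
proof -
  have t: "2 * real (runs True xs) = chg xs + of_bool (xs!0) + of_bool (xs!(length xs - 1))"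
    using runs_formula[OF assms, of True] by simp
  have f: "2 * real (runs False xs) = chg xs + of_bool (\<not> xs!0) + of_bool (\<not> xs!(length xs - 1))"
    using runs_formula[OF assms, of False] by simp
  show ?thesis unfolding RM_def ends_def of_nat_max
    using t f by (cases "xs!0"; cases "xs!(length xs - 1)") (simp_all add: max_def)
qed



lemma alg:
  fixes x y n :: real
  assumes "x \<ge> 1" "y \<ge> 1" "n = x + y" "n \<ge> 3"
  shows "(1 + 2*x*y/n + (x*(x-1)+y*(y-1))/(n*(n-1)))/2 = 2 + (n*(x-1)*(y-1) - 2*x*y)/(n*(n-1))"
    and "(1 + 2*(2*x*y/n) + 3*((x*(x-1)+y*(y-1))/(n*(n-1)))
            + (2*x*y/n + 2*(n-2)*(x*y/(n*(n-1))) + 4*x*(x-1)*y*(y-1)/(n*(n-1)))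
            + 2*(2*(x*y/(n*(n-1))) + 2*(x*(x-1)*(x-2)*y + x*y*(y-1)*(y-2))/(n*(n-1)*(n-2))))/4
         - ((1 + 2*x*y/n + (x*(x-1)+y*(y-1))/(n*(n-1)))/2)^2
        = x*y*(x^3+y^3+x^3*y+x*y^3-x^2-y^2+2*x^2*y^2-5*x^2*y-5*x*y^2+6*x*y)/(n^2*(n-1)^2*(n-2))"
proof -
  have h: "n \<noteq> 0" "n - 1 \<noteq> 0" "n - 2 \<noteq> 0" using assms by auto
  have yy: "y = n - x" using assms(3) by simp
  show "(1 + 2*x*y/n + (x*(x-1)+y*(y-1))/(n*(n-1)))/2 = 2 + (n*(x-1)*(y-1) - 2*x*y)/(n*(n-1))"
    unfolding yy using h by (simp add: field_simps)
  define e where "e = 2*n*(n-1) + n*(x-1)*(y-1) - 2*x*y"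
  define f where "f = (n*(n-1)*(n-2) + 4*x*y*(n-1)*(n-2) + 3*(x*(x-1)+y*(y-1))*(n-2) + 2*x*y*(n-1)*(n-2)
     + 2*(n-2)^2*x*y + 4*x*(x-1)*y*(y-1)*(n-2) + 4*x*y*(n-2) + 4*(x*(x-1)*(x-2)*y + x*y*(y-1)*(y-2)))"
  have E: "(1 + 2*x*y/n + (x*(x-1)+y*(y-1))/(n*(n-1)))/2 = e/(n*(n-1))"
    unfolding yy e_def using h by (simp add: field_simps)
  have E2: "(1 + 2*(2*x*y/n) + 3*((x*(x-1)+y*(y-1))/(n*(n-1)))
            + (2*x*y/n + 2*(n-2)*(x*y/(n*(n-1))) + 4*x*(x-1)*y*(y-1)/(n*(n-1)))
            + 2*(2*(x*y/(n*(n-1))) + 2*(x*(x-1)*(x-2)*y + x*y*(y-1)*(y-2))/(n*(n-1)*(n-2))))/4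
          = f/(4*(n*(n-1)*(n-2)))"
    unfolding f_def using h by (simp add: divide_simps) (simp add: yy algebra_simps power2_eq_square)
  have D: "f/(4*(n*(n-1)*(n-2))) - (e/(n*(n-1)))^2 = ((f*n*(n-1) - 4*e^2*(n-2))/4)/(n^2*(n-1)^2*(n-2))"
    using h by (simp add: divide_simps) (simp add: algebra_simps power2_eq_square)
  have P: "(f*n*(n-1) - 4*e^2*(n-2))/4 = x*y*(x^3+y^3+x^3*y+x*y^3-x^2-y^2+2*x^2*y^2-5*x^2*y-5*x*y^2+6*x*y)"
    unfolding f_def e_def yy by (simp add: field_simps power2_eq_square power3_eq_cube)
  show "(1 + 2*(2*x*y/n) + 3*((x*(x-1)+y*(y-1))/(n*(n-1)))
            + (2*x*y/n + 2*(n-2)*(x*y/(n*(n-1))) + 4*x*(x-1)*y*(y-1)/(n*(n-1)))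
            + 2*(2*(x*y/(n*(n-1))) + 2*(x*(x-1)*(x-2)*y + x*y*(y-1)*(y-2))/(n*(n-1)*(n-2))))/4
         - ((1 + 2*x*y/n + (x*(x-1)+y*(y-1))/(n*(n-1)))/2)^2
        = x*y*(x^3+y^3+x^3*y+x*y^3-x^2-y^2+2*x^2*y^2-5*x^2*y-5*x*y^2+6*x*y)/(n^2*(n-1)^2*(n-2))"
    unfolding E E2 D P ..
qed


lemma row_sum:
  fixes h :: "nat \<Rightarrow> real"
  assumes "\<And>j. j < k \<Longrightarrow> h j = c"
  shows "(\<Sum>j<k. h j) = real k * c"
  using assms by (simp add: sum.cong[of "{..<k}" "{..<k}" h "\<lambda>_. c"])

lemma dsum:
  fixes h :: "nat \<Rightarrow> nat \<Rightarrow> real"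
  assumes a: "\<And>i. i<M \<Longrightarrow> h i i = a"
    and b1: "\<And>i. Suc i < M \<Longrightarrow> h i (Suc i) = b"
    and b2: "\<And>i. Suc i < M \<Longrightarrow> h (Suc i) i = b"
    and c: "\<And>i j. i<M \<Longrightarrow> j<M \<Longrightarrow> Suc i < j \<or> Suc j < i \<Longrightarrow> h i j = c"
  shows "Suc k \<le> M \<Longrightarrow> (\<Sum>i<Suc k. \<Sum>j<Suc k. h i j) = real (Suc k) * a + 2 * real k * b + real k * (real k - 1) * c"
proof (induction k)
  case 0 then show ?case using a by simp
next
  case (Suc k)
  have r1: "(\<Sum>j<Suc k. h (Suc k) j) = b + real k * c"
  proof -
    have "(\<Sum>j<k. h (Suc k) j) = real k * c" using Suc.prems by (intro row_sum c) auto
    then show ?thesis using b2[of k] Suc.prems by simp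
  qed
  have r2: "(\<Sum>i<Suc k. h i (Suc k)) = b + real k * c"
  proof -
    have "(\<Sum>i<k. h i (Suc k)) = real k * c" using Suc.prems by (intro row_sum c) auto
    then show ?thesis using b1[of k] Suc.prems by simp
  qed
  have "(\<Sum>i<Suc (Suc k). \<Sum>j<Suc (Suc k). h i j)
      = (\<Sum>i<Suc k. \<Sum>j<Suc k. h i j) + (\<Sum>i<Suc k. h i (Suc k)) + (\<Sum>j<Suc k. h (Suc k) j) + h (Suc k) (Suc k)"
    by (simp add: sum.distrib)
  also have "\<dots> = real (Suc k) * a + 2 * real k * b + real k * (real k - 1) * c + 2 * (b + real k * c) + a"
    using Suc r1 r2 a[of "Suc k"] by simp
  finally show ?case by (simp add: algebra_simps)
qed

lemma lsum:
  fixes g :: "nat \<Rightarrow> real"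
  assumes "g 0 = b" "\<And>i. 0 < i \<Longrightarrow> Suc i < M \<Longrightarrow> g i = e"
  shows "Suc k < M \<Longrightarrow> (\<Sum>i<Suc k. g i) = b + real k * e"
proof (induction k)
  case 0 then show ?case using assms by simp
next
  case (Suc k) then show ?case using assms(2)[of "Suc k"] by (simp add: algebra_simps)
qed

lemma len_arr: "xs \<in> arrangements n1 n2 \<Longrightarrow> length xs = n1 + n2"
  by (simp add: arrangements_def)

lemma SC:
  assumes "n = n1 + n2" "n \<ge> 2"
  shows "(\<Sum>xs\<in>arrangements n1 n2. chg xs) = real (card (arrangements n1 n2)) * (2 * real n1 * real n2 / real n)"
proof -
  have "(\<Sum>xs\<in>arrangements n1 n2. chg xs)
      = (\<Sum>xs\<in>arrangements n1 n2. \<Sum>i<n-1. of_bool (xs!i \<noteq> xs!Suc i))"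
    using assms(1) by (intro sum.cong) (auto simp: chg_def len_arr)
  also have "\<dots> = (\<Sum>i<n-1. \<Sum>xs\<in>arrangements n1 n2. of_bool (xs!i \<noteq> xs!Suc i))"
    by (rule sum.swap)
  also have "\<dots> = (\<Sum>i<n-1. real (card (arrangements n1 n2)) * (2 * real n1 * real n2) / (real n * (real n - 1)))"
    using assms by (intro sum.cong refl F1) auto
  also have "\<dots> = real (n - 1) * (real (card (arrangements n1 n2)) * (2 * real n1 * real n2) / (real n * (real n - 1)))"
    by simp
  also have "\<dots> = real (card (arrangements n1 n2)) * (2 * real n1 * real n2 / real n)"
  proof -
    have h: "real (n - 1) = real n - 1" "real n - 1 \<noteq> 0" "real n \<noteq> 0" using assms(2) by (auto simp: of_nat_diff)
    show ?thesis unfolding h(1) using h(2,3) by (simp add: field_simps)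
  qed
  finally show ?thesis .
qed

lemma SI:
  assumes "n = n1 + n2" "n \<ge> 2"
  shows "(\<Sum>xs\<in>arrangements n1 n2. ends xs) = real (card (arrangements n1 n2)) * (real n1 * (real n1 - 1) + real n2 * (real n2 - 1)) / (real n * (real n - 1))"
proof -
  have "(\<Sum>xs\<in>arrangements n1 n2. ends xs) = (\<Sum>xs\<in>arrangements n1 n2. of_bool (xs!0 = xs!(n-1)))"
    using assms(1) by (intro sum.cong) (auto simp: ends_def len_arr)
  also have "\<dots> = real (card (arrangements n1 n2)) * (real n1 * (real n1 - 1) + real n2 * (real n2 - 1)) / (real n * (real n - 1))"
    using assms by (intro F2) auto
  finally show ?thesis .
qed

lemma SCC:
  assumes "n = n1 + n2" "n \<ge> 2"
  shows "(\<Sum>xs\<in>arrangements n1 n2. (chg xs)^2) = real (card (arrangements n1 n2)) *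
     (2 * real n1 * real n2 / real n + 2 * (real n - 2) * (real n1 * real n2 / (real n * (real n - 1)))
      + 4 * real n1 * (real n1 - 1) * real n2 * (real n2 - 1) / (real n * (real n - 1)))"
proof -
  define N where "N = real (card (arrangements n1 n2))"
  define h where "h i j = (\<Sum>xs\<in>arrangements n1 n2. of_bool (xs!i \<noteq> xs!Suc i \<and> xs!j \<noteq> xs!Suc j) :: real)" for i j
  define k where "k = n - 2"
  have nk: "n - 1 = Suc k" using assms k_def by simp
  have "(\<Sum>xs\<in>arrangements n1 n2. (chg xs)^2)
      = (\<Sum>xs\<in>arrangements n1 n2. \<Sum>i<n-1. \<Sum>j<n-1. of_bool (xs!i \<noteq> xs!Suc i \<and> xs!j \<noteq> xs!Suc j) :: real)"
  proof (intro sum.cong refl)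
    fix xs assume "xs \<in> arrangements n1 n2"
    then have l: "length xs = n" using assms(1) len_arr by simp
    show "(chg xs)^2 = (\<Sum>i<n-1. \<Sum>j<n-1. of_bool (xs!i \<noteq> xs!Suc i \<and> xs!j \<noteq> xs!Suc j) :: real)"
      unfolding chg_def l power2_eq_square sum_product of_bool_conj ..
  qed
  also have "\<dots> = (\<Sum>i<n-1. \<Sum>xs\<in>arrangements n1 n2. \<Sum>j<n-1. of_bool (xs!i \<noteq> xs!Suc i \<and> xs!j \<noteq> xs!Suc j) :: real)"
    by (rule sum.swap)
  also have "\<dots> = (\<Sum>i<n-1. \<Sum>j<n-1. h i j)"
    unfolding h_def by (intro sum.cong refl sum.swap)
  also have "\<dots> = real (Suc k) * (N * (2 * real n1 * real n2) / (real n * (real n - 1)))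
       + 2 * real k * (N * (real n1 * real n2) / (real n * (real n - 1)))
       + real k * (real k - 1) * (N * (4 * ff n1 2 * ff n2 2) / ff n 4)"
    unfolding nk
  proof (rule dsum[where M = "n-1"])
    fix i assume "i < n - 1"
    then show "h i i = N * (2 * real n1 * real n2) / (real n * (real n - 1))"
      unfolding h_def N_def using F1[of n n1 n2 i "Suc i"] assms by simp
  next
    fix i assume "Suc i < n - 1"
    then show "h i (Suc i) = N * (real n1 * real n2) / (real n * (real n - 1))"
      unfolding h_def N_def using F3[of n n1 n2 i "Suc i" "Suc (Suc i)"] assms by simp
  next
    fix i assume "Suc i < n - 1"
    then show "h (Suc i) i = N * (real n1 * real n2) / (real n * (real n - 1))"
      unfolding h_def N_def using F3[of n n1 n2 i "Suc i" "Suc (Suc i)"] assms by (simp add: conj_commute)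
  next
    fix i j assume "i < n - 1" "j < n - 1" "Suc i < j \<or> Suc j < i"
    then show "h i j = N * (4 * ff n1 2 * ff n2 2) / ff n 4"
      unfolding h_def N_def using F4a[of n n1 n2 i "Suc i" j "Suc j"] assms by auto
  next
    show "Suc k \<le> n - 1" using nk by simp
  qed
  also have "\<dots> = N * (2 * real n1 * real n2 / real n + 2 * (real n - 2) * (real n1 * real n2 / (real n * (real n - 1)))
      + 4 * real n1 * (real n1 - 1) * real n2 * (real n2 - 1) / (real n * (real n - 1)))"
  proof -
    have rk: "real k = real n - 2" using assms k_def by simp
    have t1: "real (Suc k) * (N * (2 * real n1 * real n2) / (real n * (real n - 1))) = N * (2 * real n1 * real n2 / real n)"
    proof -
      have rs: "real (Suc k) = real n - 1" using rk by simp
      have nz: "real n \<noteq> 0" "real n - 1 \<noteq> 0" using assms(2) by auto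
      show ?thesis unfolding rs using nz by (simp add: field_simps)
    qed
    have t3: "real k * (real k - 1) * (N * (4 * ff n1 2 * ff n2 2) / ff n 4)
        = N * (4 * real n1 * (real n1 - 1) * real n2 * (real n2 - 1) / (real n * (real n - 1)))"
    proof (cases "n \<ge> 4")
      case True
      then have "real n - 2 \<noteq> 0" "real n - 3 \<noteq> 0" "real n \<noteq> 0" "real n - 1 \<noteq> 0" by auto
      then have q: "(real n - 2) * (real n - 3) \<noteq> 0" by simp
      have f4: "ff n 4 = (real n * (real n - 1)) * ((real n - 2) * (real n - 3))" by (simp add: ff4 mult_ac)
      have kk: "real k * (real k - 1) = (real n - 2) * (real n - 3)" unfolding rk by (simp add: algebra_simps)
      have "real k * (real k - 1) * (N * (4 * ff n1 2 * ff n2 2) / ff n 4)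
          = ((real n - 2) * (real n - 3)) * (N * (4 * ff n1 2 * ff n2 2) / ((real n * (real n - 1)) * ((real n - 2) * (real n - 3))))"
        unfolding kk f4 ..
      also have "\<dots> = N * (4 * ff n1 2 * ff n2 2) / (real n * (real n - 1))"
        using q by simp
      finally show ?thesis by (simp add: ff2 mult_ac)
    next
      case False
      then have "n1 = 1 \<or> n2 = 1 \<or> n1 = 0 \<or> n2 = 0" using assms by auto
      moreover have "n = 2 \<or> n = 3" using False assms by auto
      ultimately show ?thesis using rk by (auto simp: ff2)
    qed
    have t2: "2 * real k * (N * (real n1 * real n2) / (real n * (real n - 1)))
        = N * (2 * (real n - 2) * (real n1 * real n2 / (real n * (real n - 1))))" unfolding rk by simp
    show ?thesis unfolding t1 t2 t3 by (simp add: distrib_left)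
  qed
  finally show ?thesis unfolding N_def .
qed

lemma SCI3:
  assumes "n = n1 + n2" "n \<ge> 3"
  shows "(\<Sum>xs\<in>arrangements n1 n2. chg xs * ends xs) = real (card (arrangements n1 n2)) *
     (2 * (real n1 * real n2 / (real n * (real n - 1)))
      + 2 * (real n1 * (real n1 - 1) * (real n1 - 2) * real n2 + real n1 * real n2 * (real n2 - 1) * (real n2 - 2))
          / (real n * (real n - 1) * (real n - 2)))"
proof -
  define N where "N = real (card (arrangements n1 n2))"
  define g where "g i = (\<Sum>xs\<in>arrangements n1 n2. of_bool (xs!i \<noteq> xs!Suc i \<and> xs!0 = xs!(n-1)) :: real)" for i
  define k where "k = n - 3"
  have nk: "n - 1 = Suc (Suc k)" using assms k_def by simp
  have "(\<Sum>xs\<in>arrangements n1 n2. chg xs * ends xs)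
      = (\<Sum>xs\<in>arrangements n1 n2. \<Sum>i<n-1. of_bool (xs!i \<noteq> xs!Suc i \<and> xs!0 = xs!(n-1)) :: real)"
  proof (intro sum.cong refl)
    fix xs assume "xs \<in> arrangements n1 n2"
    then have l: "length xs = n" using assms(1) len_arr by simp
    show "chg xs * ends xs = (\<Sum>i<n-1. of_bool (xs!i \<noteq> xs!Suc i \<and> xs!0 = xs!(n-1)) :: real)"
      unfolding chg_def ends_def l sum_distrib_right by simp
  qed
  also have "\<dots> = (\<Sum>i<n-1. g i)" unfolding g_def by (rule sum.swap)
  also have "\<dots> = (\<Sum>i<Suc k. g i) + g (Suc k)" unfolding nk by simp
  also have "\<dots> = N * (real n1 * real n2) / (real n * (real n - 1))
       + real k * (N * (2 * ff n1 3 * real n2 + 2 * real n1 * ff n2 3) / ff n 4)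
       + N * (real n1 * real n2) / (real n * (real n - 1))"
  proof -
    have "(\<Sum>i<Suc k. g i) = N * (real n1 * real n2) / (real n * (real n - 1))
       + real k * (N * (2 * ff n1 3 * real n2 + 2 * real n1 * ff n2 3) / ff n 4)"
    proof (rule lsum[where M = "n - 1"])
      have "g 0 = (\<Sum>xs\<in>arrangements n1 n2. of_bool (xs!0 \<noteq> xs!1 \<and> xs!1 \<noteq> xs!(n-1)))"
        unfolding g_def by (intro sum.cong refl) auto
      also have "\<dots> = N * (real n1 * real n2) / (real n * (real n - 1))"
        unfolding N_def by (rule F3[OF assms(1)]) (use assms in auto)
      finally show "g 0 = N * (real n1 * real n2) / (real n * (real n - 1))" .
    next
      fix i assume "0 < i" "Suc i < n - 1"
      have "g i = (\<Sum>xs\<in>arrangements n1 n2. of_bool (xs!0 = xs!(n-1) \<and> xs!i \<noteq> xs!Suc i))"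
        unfolding g_def by (intro sum.cong refl) auto
      also have "\<dots> = N * (2 * ff n1 3 * real n2 + 2 * real n1 * ff n2 3) / ff n 4"
        unfolding N_def by (rule F4b[OF assms(1)]) (use assms \<open>0 < i\<close> \<open>Suc i < n - 1\<close> in auto)
      finally show "g i = N * (2 * ff n1 3 * real n2 + 2 * real n1 * ff n2 3) / ff n 4" .
    next
      show "Suc k < n - 1" using nk by simp
    qed
    moreover have "g (Suc k) = N * (real n1 * real n2) / (real n * (real n - 1))"
    proof -
      have sk: "Suc k = n - 2" "Suc (Suc k) = n - 1" using nk by auto
      have "g (Suc k) = (\<Sum>xs\<in>arrangements n1 n2. of_bool (xs!0 \<noteq> xs!(n-2) \<and> xs!(n-2) \<noteq> xs!(n-1)))"
        unfolding g_def sk using assms(2) by (intro sum.cong refl) (auto simp: Suc_diff_Suc numeral_2_eq_2)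
      also have "\<dots> = N * (real n1 * real n2) / (real n * (real n - 1))"
        unfolding N_def by (rule F3[OF assms(1)]) (use assms in auto)
      finally show ?thesis .
    qed
    ultimately show ?thesis by simp
  qed
  also have "\<dots> = N * (2 * (real n1 * real n2 / (real n * (real n - 1)))
      + 2 * (real n1 * (real n1 - 1) * (real n1 - 2) * real n2 + real n1 * real n2 * (real n2 - 1) * (real n2 - 2))
          / (real n * (real n - 1) * (real n - 2)))"
  proof -
    have rk: "real k = real n - 3" using assms k_def by simp
    have t3: "real k * (N * (2 * ff n1 3 * real n2 + 2 * real n1 * ff n2 3) / ff n 4)
        = N * (2 * (real n1 * (real n1 - 1) * (real n1 - 2) * real n2 + real n1 * real n2 * (real n2 - 1) * (real n2 - 2))
          / (real n * (real n - 1) * (real n - 2)))"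
    proof (cases "n \<ge> 4")
      case True
      then have "real n - 2 \<noteq> 0" "real n - 3 \<noteq> 0" "real n \<noteq> 0" "real n - 1 \<noteq> 0" by auto
      then have q: "real n - 3 \<noteq> 0" by simp
      have f4: "ff n 4 = (real n * (real n - 1) * (real n - 2)) * (real n - 3)" by (simp add: ff4)
      have "real k * (N * (2 * ff n1 3 * real n2 + 2 * real n1 * ff n2 3) / ff n 4)
          = (real n - 3) * (N * (2 * ff n1 3 * real n2 + 2 * real n1 * ff n2 3) / ((real n * (real n - 1) * (real n - 2)) * (real n - 3)))"
        unfolding rk f4 ..
      also have "\<dots> = N * (2 * ff n1 3 * real n2 + 2 * real n1 * ff n2 3) / (real n * (real n - 1) * (real n - 2))"
        using q by simp
      finally show ?thesis by (simp add: ff3 algebra_simps)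
    next
      case False
      then have "n = 3" using assms by auto
      then have "(n1 = 0 \<and> n2 = 3) \<or> (n1 = 1 \<and> n2 = 2) \<or> (n1 = 2 \<and> n2 = 1) \<or> (n1 = 3 \<and> n2 = 0)" using assms by arith
      then show ?thesis using rk \<open>n = 3\<close> by (auto simp: ff3)
    qed
    show ?thesis unfolding t3 by (simp add: distrib_left add_divide_distrib)
  qed
  finally show ?thesis unfolding N_def .
qed

lemma SCI2:
  assumes "n1 = 1" "n2 = 1"
  shows "(\<Sum>xs\<in>arrangements n1 n2. chg xs * ends xs) = 0"
proof (intro sum.neutral ballI)
  fix xs assume "xs \<in> arrangements n1 n2"
  then have "length xs = 2" using assms len_arr by fastforce
  then show "chg xs * ends xs = 0" by (auto simp: chg_def ends_def)
qed

lemma var_eq: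
  assumes "finite A" "A \<noteq> {}"
  shows "unif_var A f = (\<Sum>a\<in>A. (f a)^2) / real (card A) - ((\<Sum>a\<in>A. f a) / real (card A))^2"
proof -
  define N where "N = real (card A)"
  define E where "E = (\<Sum>a\<in>A. f a) / N"
  have N0: "N \<noteq> 0" using assms N_def by simp
  have "(\<Sum>a\<in>A. (f a - E)^2) = (\<Sum>a\<in>A. (f a)^2 - 2 * E * f a + E^2)"
    by (intro sum.cong refl) (simp add: power2_eq_square algebra_simps)
  also have "\<dots> = (\<Sum>a\<in>A. (f a)^2) - 2 * E * (\<Sum>a\<in>A. f a) + N * E^2"
    by (simp add: sum.distrib sum_subtractf sum_distrib_left N_def)
  finally have "(\<Sum>a\<in>A. (f a - E)^2) = (\<Sum>a\<in>A. (f a)^2) - N * E^2"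
    using N0 unfolding E_def by (simp add: field_simps power2_eq_square)
  then show ?thesis
    unfolding unif_var_def unif_exp_def using N0 by (simp add: E_def N_def field_simps power2_eq_square)
qed

lemma canc1: "(N::real) \<noteq> 0 \<Longrightarrow> (N + N*a + N*b)/(2*N) = (1 + a + b)/2"
  by (simp add: field_simps)
lemma canc2: "(N::real) \<noteq> 0 \<Longrightarrow> (N + 2*(N*a) + 3*(N*b) + N*c + 2*(N*d))/(4*N) = (1 + 2*a + 3*b + c + 2*d)/4"
  by (simp add: field_simps)

theorem theorem1:
  fixes n1 n2 :: nat
  assumes "n1 \<ge> 1" and "n2 \<ge> 1"
  defines "n \<equiv> n1 + n2"
  shows "(unif_exp (arrangements n1 n2) (\<lambda>xs. real (RM xs)) =
           2 + (real n * (real n1 - 1) * (real n2 - 1) - 2 * real n1 * real n2)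
               / (real n * (real n - 1))) \<and>
         (unif_var (arrangements n1 n2) (\<lambda>xs. real (RM xs)) =
           real n1 * real n2 *
             (real n1^3 + real n2^3 + real n1^3 * real n2 + real n1 * real n2^3
              - real n1^2 - real n2^2 + 2 * real n1^2 * real n2^2
              - 5 * real n1^2 * real n2 - 5 * real n1 * real n2^2 + 6 * real n1 * real n2)
           / ((real n)^2 * (real n - 1)^2 * (real n - 2)))"
proof -
  define A where "A = arrangements n1 n2"
  define N where "N = real (card A)"
  have n2': "n \<ge> 2" using assms n_def by simp
  have nd: "n = n1 + n2" by (simp add: n_def)
  have fA: "finite A" unfolding A_def by (rule fin_arr)
  have cpos: "card A > 0" unfolding A_def card_arr using n_def by simp
  then have Ane: "A \<noteq> {}" by auto
  have N0: "N \<noteq> 0" using cpos N_def by simp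
  have ne: "xs \<noteq> []" if "xs \<in> A" for xs using len_arr[of xs n1 n2] that A_def n2' n_def by auto
  have sRM: "(\<Sum>xs\<in>A. real (RM xs)) = (N + (\<Sum>xs\<in>A. chg xs) + (\<Sum>xs\<in>A. ends xs)) / 2"
  proof -
    have "(\<Sum>xs\<in>A. real (RM xs)) = (\<Sum>xs\<in>A. (1 + chg xs + ends xs) / 2)"
      using RM_formula ne by (intro sum.cong) auto
    then show ?thesis by (simp add: sum_divide_distrib[symmetric] sum.distrib N_def)
  qed
  have sRM2: "(\<Sum>xs\<in>A. (real (RM xs))^2) = (N + 2 * (\<Sum>xs\<in>A. chg xs) + 3 * (\<Sum>xs\<in>A. ends xs)
        + (\<Sum>xs\<in>A. (chg xs)^2) + 2 * (\<Sum>xs\<in>A. chg xs * ends xs)) / 4"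
  proof -
    have "(\<Sum>xs\<in>A. (real (RM xs))^2) = (\<Sum>xs\<in>A. (1 + 2 * chg xs + 3 * ends xs + (chg xs)^2 + 2 * (chg xs * ends xs)) / 4)"
    proof (intro sum.cong refl)
      fix xs assume "xs \<in> A"
      have ee: "ends xs * ends xs = ends xs" by (auto simp: ends_def)
      show "(real (RM xs))^2 = (1 + 2 * chg xs + 3 * ends xs + (chg xs)^2 + 2 * (chg xs * ends xs)) / 4"
        unfolding RM_formula[OF ne[OF \<open>xs \<in> A\<close>]]
        by (simp add: power2_eq_square field_simps ee)
    qed
    then show ?thesis
      by (simp add: sum_divide_distrib[symmetric] sum.distrib sum_distrib_left[symmetric] N_def)
  qed
  have E: "unif_exp A (\<lambda>xs. real (RM xs)) = (N + (\<Sum>xs\<in>A. chg xs) + (\<Sum>xs\<in>A. ends xs)) / (2 * N)"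
    unfolding unif_exp_def sRM N_def by simp
  have V: "unif_var A (\<lambda>xs. real (RM xs)) = (N + 2 * (\<Sum>xs\<in>A. chg xs) + 3 * (\<Sum>xs\<in>A. ends xs)
        + (\<Sum>xs\<in>A. (chg xs)^2) + 2 * (\<Sum>xs\<in>A. chg xs * ends xs)) / (4 * N)
        - ((N + (\<Sum>xs\<in>A. chg xs) + (\<Sum>xs\<in>A. ends xs)) / (2 * N))^2"
    unfolding var_eq[OF fA Ane] sRM sRM2 N_def by simp
  have sc: "(\<Sum>xs\<in>A. chg xs) = N * (2 * real n1 * real n2 / real n)"
    using SC[OF nd n2'] unfolding A_def N_def .
  have si: "(\<Sum>xs\<in>A. ends xs) = N * ((real n1 * (real n1 - 1) + real n2 * (real n2 - 1)) / (real n * (real n - 1)))"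
    using SI[OF nd n2'] unfolding A_def N_def by simp
  have scc: "(\<Sum>xs\<in>A. (chg xs)^2) = N *
     (2 * real n1 * real n2 / real n + 2 * (real n - 2) * (real n1 * real n2 / (real n * (real n - 1)))
      + 4 * real n1 * (real n1 - 1) * real n2 * (real n2 - 1) / (real n * (real n - 1)))"
    using SCC[OF nd n2'] unfolding A_def N_def .
  show ?thesis
  proof (cases "n = 2")
    case True
    then have o: "n1 = 1" "n2 = 1" using assms n_def by auto
    have sci: "(\<Sum>xs\<in>A. chg xs * ends xs) = 0" using SCI2[OF o] unfolding A_def .
    show ?thesis unfolding A_def[symmetric] E V sc si scc sci using N0 o True by (simp add: field_simps)
  next
    case False
    then have n3: "n \<ge> 3" using n2' by simp
    have sci: "(\<Sum>xs\<in>A. chg xs * ends xs) = N *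
     (2 * (real n1 * real n2 / (real n * (real n - 1)))
      + 2 * (real n1 * (real n1 - 1) * (real n1 - 2) * real n2 + real n1 * real n2 * (real n2 - 1) * (real n2 - 2))
          / (real n * (real n - 1) * (real n - 2)))"
      using SCI3[OF nd n3] unfolding A_def N_def .
    have rn: "real n = real n1 + real n2" "real n \<ge> 3" using n_def n3 by auto
    have a1: "real n1 \<ge> 1" "real n2 \<ge> 1" using assms by auto
    show ?thesis unfolding A_def[symmetric] E V sc si scc sci canc1[OF N0] canc2[OF N0]
      using alg[OF a1 rn] by simp
  qed
qed


end
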